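(* Let $G$ be a connected simple graph on $n\ge2$ vertices labeled so that $m_1\ge m_2\ge\cdots\ge m_n$, where $m_i=\frac{\sum_{j\sim i}d_j}{d_i}$. Let $N=\max_{i\sim j}d_j/d_i$. Then for $1\le i\le n$, \[\rho(A(G))\le \frac{m_i-N+\sqrt{(m_i+N)^2+4N\sum_{k=1}^{i-1}(m_k-m_i)}}{2},\] and equality holds if and only if $m_1=m_2=\cdots=m_n$ (i.e., $G$ is pseudo-regular).
   Context: $A(G)$ is the adjacency matrix of $G$, $d_i$ the degree of vertex $v_i$, $i\sim j$ means $v_i$ and $v_j$ are adjacent, $m_i$ is the average degree of $v_i$, and $\rho$ is the spectral radius. A graph is pseudo-regular if all $m_i$ are equal. An empty sum equals $0$. *)

theory Defs
  imports Complex_Main "Jordan_Normal_Form.Spectral_Radius"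
begin

definition simple_graph :: "nat \<Rightarrow> (nat \<Rightarrow> nat \<Rightarrow> bool) \<Rightarrow> bool" where
  "simple_graph n E \<longleftrightarrow> (\<forall>i j. E i j \<longrightarrow> i < n \<and> j < n) \<and>
     (\<forall>i j. E i j \<longrightarrow> E j i) \<and> (\<forall>i. \<not> E i i)"

definition connected_graph :: "nat \<Rightarrow> (nat \<Rightarrow> nat \<Rightarrow> bool) \<Rightarrow> bool" where
  "connected_graph n E \<longleftrightarrow> (\<forall>i<n. \<forall>j<n. E\<^sup>*\<^sup>* i j)"

definition gdegree :: "nat \<Rightarrow> (nat \<Rightarrow> nat \<Rightarrow> bool) \<Rightarrow> nat \<Rightarrow> nat" where
  "gdegree n E i = card {j. j < n \<and> E i j}"

definition avg_degree :: "nat \<Rightarrow> (nat \<Rightarrow> nat \<Rightarrow> bool) \<Rightarrow> nat \<Rightarrow> real" where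
  "avg_degree n E i = (\<Sum>j | j < n \<and> E i j. real (gdegree n E j)) / real (gdegree n E i)"

definition adj_matrix :: "nat \<Rightarrow> (nat \<Rightarrow> nat \<Rightarrow> bool) \<Rightarrow> complex mat" where
  "adj_matrix n E = mat n n (\<lambda>(i, j). if E i j then 1 else 0)"

definition max_deg_ratio :: "nat \<Rightarrow> (nat \<Rightarrow> nat \<Rightarrow> bool) \<Rightarrow> real" where
  "max_deg_ratio n E = Max {real (gdegree n E j) / real (gdegree n E i) | i j. i < n \<and> j < n \<and> E i j}"

end

theory Submission
  imports Defs
begin


lemma key:
  fixes w y :: "nat \<Rightarrow> real" and r phi :: real
  assumes Aw: "\<forall>i<n. (\<Sum>j\<in>{j. j<n \<and> E i j}. w j) \<le> phi * w i"
    and wpos: "\<forall>i<n. w i > 0" and ynn: "\<forall>i<n. y i \<ge> 0" and p0: "p0 < n" "y p0 > 0"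
    and Ay: "\<forall>i<n. r * y i \<le> (\<Sum>j\<in>{j. j<n \<and> E i j}. y j)"
  shows "r \<le> phi"
    and "\<lbrakk>\<forall>i j. E i j \<longrightarrow> i<n \<and> j<n; \<forall>i<n. \<forall>j<n. E\<^sup>*\<^sup>* i j;
          i0 < n; (\<Sum>j\<in>{j. j<n \<and> E i0 j}. w j) < phi * w i0\<rbrakk> \<Longrightarrow> r < phi"
proof -
  define f where "f i = y i / w i" for i
  have fin: "finite (f ` {..<n})" by simp
  have ne: "f ` {..<n} \<noteq> {}" using p0 by auto
  obtain p where p: "p < n" "f p = Max (f ` {..<n})"
    using Max_in[OF fin ne] by auto
  have fle: "f i \<le> f p" if "i < n" for i using p that fin by auto
  define t where "t = f p"
  have tpos: "t > 0"
  proof -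
    have "f p0 > 0" using p0 wpos unfolding f_def by auto
    thus ?thesis using fle[OF p0(1)] t_def by auto
  qed
  have yle: "y i \<le> t * w i" if "i<n" for i
    using fle[OF that] wpos that unfolding t_def f_def by (auto simp: field_simps)
  have yp: "y p = t * w p" using wpos p(1) unfolding t_def f_def by auto
  have sumle: "(\<Sum>j\<in>{j. j<n \<and> E i j}. y j) \<le> t * (\<Sum>j\<in>{j. j<n \<and> E i j}. w j)" for i
    unfolding sum_distrib_left by (rule sum_mono) (simp add: yle)
  have ypos: "y p > 0" using yp tpos wpos p(1) by auto
  have "r * y p \<le> t * (phi * w p)"
    using Ay p(1) sumle[of p] Aw tpos
    by (meson dual_order.trans mult_left_mono less_imp_le)
  hence "r * y p \<le> phi * y p" using yp by (simp add: algebra_simps)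
  thus rle: "r \<le> phi" using ypos by simp
  assume sg: "\<forall>i j. E i j \<longrightarrow> i<n \<and> j<n" and con: "\<forall>i<n. \<forall>j<n. E\<^sup>*\<^sup>* i j"
    and i0: "i0 < n" "(\<Sum>j\<in>{j. j<n \<and> E i0 j}. w j) < phi * w i0"
  show "r < phi"
  proof (rule ccontr)
    assume "\<not> r < phi"
    hence req: "r = phi" using rle by simp
    define v where "v i = t * w i - y i" for i
    have vnn: "v i \<ge> 0" if "i<n" for i using yle[OF that] v_def by auto
    have propg: "v b = 0" if "v a = 0" "E a b" for a b
    proof -
      have ab: "a < n" "b < n" using sg that(2) by auto
      have ya: "y a = t * w a" using that(1) v_def by auto
      have "(\<Sum>j\<in>{j. j<n \<and> E a j}. v j) = t * (\<Sum>j\<in>{j. j<n \<and> E a j}. w j) - (\<Sum>j\<in>{j. j<n \<and> E a j}. y j)"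
        unfolding v_def by (simp add: sum_subtractf sum_distrib_left)
      also have "\<dots> \<le> t * (phi * w a) - phi * y a"
      proof -
        have "t * (\<Sum>j\<in>{j. j<n \<and> E a j}. w j) \<le> t * (phi * w a)"
          using Aw ab(1) tpos by (simp add: mult_left_mono)
        moreover have "phi * y a \<le> (\<Sum>j\<in>{j. j<n \<and> E a j}. y j)"
          using Ay ab(1) req by simp
        ultimately show ?thesis by linarith
      qed
      also have "\<dots> = 0" using ya by (simp add: algebra_simps)
      finally have s0: "(\<Sum>j\<in>{j. j<n \<and> E a j}. v j) \<le> 0" .
      have "(\<Sum>j\<in>{j. j<n \<and> E a j}. v j) = 0"
      proof -
        have "(\<Sum>j\<in>{j. j<n \<and> E a j}. v j) \<ge> 0" by (rule sum_nonneg) (simp add: vnn)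
        thus ?thesis using s0 by linarith
      qed
      hence "\<forall>j\<in>{j. j<n \<and> E a j}. v j = 0"
        by (subst (asm) sum_nonneg_eq_0_iff) (auto simp: vnn)
      thus ?thesis using ab that(2) by auto
    qed
    have vp: "v p = 0" using yp v_def by auto
    have "E\<^sup>*\<^sup>* p i \<Longrightarrow> v i = 0" for i
      by (induction rule: rtranclp_induct) (use vp propg in auto)
    hence v0: "v i = 0" if "i<n" for i using con p(1) that by auto
    have "phi * (t * w i0) \<le> (\<Sum>j\<in>{j. j<n \<and> E i0 j}. y j)"
      using Ay i0(1) req v0[OF i0(1)] v_def by auto
    also have "\<dots> = t * (\<Sum>j\<in>{j. j<n \<and> E i0 j}. w j)"
      using v0 v_def by (auto simp: sum_distrib_left intro!: sum.cong)
    also have "\<dots> < t * (phi * w i0)" using i0(2) tpos by simp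
    finally show False by (simp add: algebra_simps)
  qed
qed


lemma deg_pos:
  assumes sg: "simple_graph n E" and con: "connected_graph n E" and n2: "n \<ge> 2" and i: "i < n"
  shows "gdegree n E i > 0"
proof -
  obtain j where j: "j < n" "j \<noteq> i" using n2 i
    by (metis One_nat_def less_2_cases_iff less_le_trans not_less_eq_eq numeral_2_eq_2 zero_less_Suc)
  have "E\<^sup>*\<^sup>* i j" using con i j unfolding connected_graph_def by auto
  then obtain k where "E i k" using j(2) by (metis converse_rtranclpE)
  hence "k \<in> {j. j < n \<and> E i j}" using sg unfolding simple_graph_def by auto
  thus ?thesis unfolding gdegree_def by (auto simp: card_gt_0_iff)
qed

lemma ratio_le:
  assumes sg: "simple_graph n E" and e: "E i j"
  shows "real (gdegree n E j) / real (gdegree n E i) \<le> max_deg_ratio n E"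
proof -
  let ?S = "{real (gdegree n E j) / real (gdegree n E i) | i j. i < n \<and> j < n \<and> E i j}"
  have "?S \<subseteq> (\<lambda>(i,j). real (gdegree n E j) / real (gdegree n E i)) ` ({..<n} \<times> {..<n})" by auto
  hence fin: "finite ?S" by (rule finite_subset) auto
  have "real (gdegree n E j) / real (gdegree n E i) \<in> ?S" using sg e unfolding simple_graph_def by blast
  thus ?thesis unfolding max_deg_ratio_def using fin by simp
qed

lemma ratio_le':
  assumes sg: "simple_graph n E" and con: "connected_graph n E" and n2: "n \<ge> 2" and e: "E i j"
  shows "real (gdegree n E j) \<le> max_deg_ratio n E * real (gdegree n E i)"
proof -
  have "i < n" using sg e unfolding simple_graph_def by auto
  hence "real (gdegree n E i) > 0" using deg_pos[OF sg con n2] by auto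
  thus ?thesis using ratio_le[OF sg e] by (simp add: field_simps)
qed

lemma N_ge1:
  assumes sg: "simple_graph n E" and con: "connected_graph n E" and n2: "n \<ge> 2"
  shows "max_deg_ratio n E \<ge> 1"
proof -
  have "0 < gdegree n E 0" using deg_pos[OF assms] n2 by auto
  then obtain k where k: "k < n" "E 0 k" unfolding gdegree_def by (metis (mono_tags, lifting) card.empty empty_Collect_eq less_irrefl)
  have ek: "E k 0" using k sg unfolding simple_graph_def by auto
  have p0: "real (gdegree n E 0) > 0" "real (gdegree n E k) > 0" using deg_pos[OF assms] n2 k by auto
  have a: "real (gdegree n E k) \<le> max_deg_ratio n E * real (gdegree n E 0)"
    using ratio_le'[OF assms k(2)] .
  have b: "real (gdegree n E 0) \<le> max_deg_ratio n E * real (gdegree n E k)"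
    using ratio_le'[OF assms ek] .
  show ?thesis
  proof (rule ccontr)
    assume "\<not> ?thesis"
    hence "max_deg_ratio n E < 1" by simp
    hence "max_deg_ratio n E * real (gdegree n E 0) < real (gdegree n E 0)"
      "max_deg_ratio n E * real (gdegree n E k) < real (gdegree n E k)" using p0 by auto
    thus False using a b by linarith
  qed
qed

lemma avg_mult:
  assumes "gdegree n E i > 0"
  shows "real (gdegree n E i) * avg_degree n E i = (\<Sum>j | j < n \<and> E i j. real (gdegree n E j))"
  using assms unfolding avg_degree_def by simp

lemma adj_mult:
  assumes i: "i < n" and v: "dim_vec v = n"
  shows "(adj_matrix n E *\<^sub>v v) $ i = (\<Sum>j | j < n \<and> E i j. v $ j)"
proof -
  have "(adj_matrix n E *\<^sub>v v) $ i = (\<Sum>j\<in>{0..<n}. (if E i j then 1 else 0) * v $ j)"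
    using i v unfolding adj_matrix_def by (auto simp: scalar_prod_def intro!: sum.cong)
  also have "\<dots> = (\<Sum>j\<in>{0..<n}. if E i j then v $ j else 0)" by (auto intro!: sum.cong)
  also have "\<dots> = (\<Sum>j\<in>{x\<in>{0..<n}. E i x}. v $ j)" by (rule sum.inter_filter[symmetric]) simp
  also have "{x\<in>{0..<n}. E i x} = {j. j < n \<and> E i j}" by auto
  finally show ?thesis .
qed



lemma main_l:
  assumes sg: "simple_graph n E" and con: "connected_graph n E" and n2: "n \<ge> 2"
    and sorted: "\<forall>i j. i \<le> j \<and> j < n \<longrightarrow> avg_degree n E j \<le> avg_degree n E i"
    and l: "l < n"
  defines "m \<equiv> avg_degree n E" and "N \<equiv> max_deg_ratio n E"
  defines "phi \<equiv> (m l - N + sqrt ((m l + N)\<^sup>2 + 4 * N * (\<Sum>k<l. m k - m l))) / 2"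
  shows "spectral_radius (adj_matrix n E) \<le> phi \<and>
     (spectral_radius (adj_matrix n E) = phi \<longleftrightarrow> (\<forall>j<n. \<forall>k<n. m j = m k))"
proof -
  define d where "d j = real (gdegree n E j)" for j
  define Nb where "Nb i = {j. j < n \<and> E i j}" for i
  have sgE: "E i j \<Longrightarrow> i < n \<and> j < n" "E i j \<Longrightarrow> E j i" "\<not> E i i" for i j
    using sg unfolding simple_graph_def by auto
  have finNb: "finite (Nb i)" for i unfolding Nb_def by simp
  have dcard: "d i = real (card (Nb i))" for i unfolding d_def Nb_def gdegree_def by simp
  have dpos: "j < n \<Longrightarrow> d j > 0" for j using deg_pos[OF sg con n2] unfolding d_def by auto
  have dm: "i < n \<Longrightarrow> d i * m i = (\<Sum>j\<in>Nb i. d j)" for i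
    using avg_mult[of n E i] deg_pos[OF sg con n2, of i] unfolding d_def m_def Nb_def by simp
  have rat: "E i j \<Longrightarrow> d j \<le> N * d i" for i j using ratio_le'[OF sg con n2] unfolding d_def N_def by simp
  have N1: "N \<ge> 1" using N_ge1[OF sg con n2] unfolding N_def .
  have mnn: "i < n \<Longrightarrow> m i \<ge> 0" for i
  proof -
    assume i: "i < n"
    have "(\<Sum>j\<in>Nb i. d j) \<ge> 0" by (rule sum_nonneg) (auto simp: d_def)
    hence "d i * m i \<ge> 0" using dm[OF i] by simp
    thus ?thesis using dpos[OF i] by (simp add: zero_le_mult_iff)
  qed
  have msort: "k \<le> k' \<Longrightarrow> k' < n \<Longrightarrow> m k' \<le> m k" for k k' using sorted unfolding m_def by auto
  define S where "S = (\<Sum>k<l. m k - m l)"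
  have Snn: "S \<ge> 0" unfolding S_def by (rule sum_nonneg) (use msort l in auto)
  define q where "q = sqrt ((m l + N)\<^sup>2 + 4 * N * S)"
  have phi: "phi = (m l - N + q) / 2" unfolding phi_def q_def S_def ..
  have mlnn: "m l \<ge> 0" using mnn l by simp
  have qge: "q \<ge> m l + N"
  proof -
    have "sqrt ((m l + N)\<^sup>2) \<le> q" unfolding q_def
      by (rule real_sqrt_le_mono) (use N1 Snn in simp)
    thus ?thesis using mlnn N1 by simp
  qed
  have q2: "q\<^sup>2 = (m l + N)\<^sup>2 + 4 * N * S" unfolding q_def using N1 Snn by simp
  have phiN: "phi + N > 0" using phi qge mlnn N1 by simp
  have phige: "phi \<ge> m l" using phi qge by simp
  have ident: "(phi + N) * (phi - m l) = N * S"
  proof -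
    have "(phi + N) * (phi - m l) = (q\<^sup>2 - (m l + N)\<^sup>2) / 4" unfolding phi
      by (simp add: field_simps power2_eq_square)
    thus ?thesis using q2 by simp
  qed
  define c where "c k = (if k < l then (m k - m l) / (phi + N) else 0)" for k
  have cnn: "c k \<ge> 0" for k unfolding c_def using msort[of k l] l phiN by auto
  have csum: "(\<Sum>k<n. c k) = S / (phi + N)"
  proof -
    have "(\<Sum>k<n. c k) = (\<Sum>k<l. c k)"
      by (rule sum.mono_neutral_right) (use l in \<open>auto simp: c_def\<close>)
    also have "\<dots> = (\<Sum>k<l. (m k - m l) / (phi + N))" unfolding c_def by simp
    also have "\<dots> = S / (phi + N)" unfolding S_def by (simp add: sum_divide_distrib)
    finally show ?thesis .
  qed
  define C where "C = (\<Sum>k<n. c k)"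
  have NC: "N * C = phi - m l"
    unfolding C_def csum using ident phiN by (simp add: field_simps)
  define w where "w k = d k * (1 + c k)" for k
  have wpos: "\<forall>i<n. w i > 0" unfolding w_def using dpos cnn by (simp add: add_pos_nonneg)
  define T1 where "T1 i = (\<Sum>j\<in>Nb i. d j * c j)" for i
  define T2 where "T2 i = (\<Sum>j\<in>Nb i. c j)" for i
  have R: "(\<Sum>j\<in>Nb i. w j) = d i * m i + T1 i" if "i < n" for i
    unfolding w_def T1_def dm[OF that] by (simp add: algebra_simps sum.distrib)
  have T12: "T1 i \<le> N * d i * T2 i" for i
    unfolding T1_def T2_def sum_distrib_left
    by (rule sum_mono) (use rat cnn in \<open>auto simp: Nb_def intro!: mult_right_mono\<close>)
  have T12s: "T1 i < N * d i * T2 i" if "j \<in> Nb i" "d j < N * d i" "c j > 0" for i j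
    unfolding T1_def T2_def sum_distrib_left
    by (rule sum_strict_mono_ex1) (use rat cnn that finNb in \<open>auto simp: Nb_def intro!: mult_right_mono\<close>)
  have Nbsub: "Nb i \<subseteq> {..<n} - {i}" for i using sgE unfolding Nb_def by auto
  have rem: "(\<Sum>k\<in>{..<n} - {i}. c k) = C - c i" if "i < n" for i
    unfolding C_def using that by (simp add: sum_diff1)
  have T23: "T2 i \<le> C - c i" if "i < n" for i
    unfolding T2_def rem[OF that, symmetric]
    by (rule sum_mono2) (use Nbsub cnn in auto)
  have T23s: "T2 i < C - c i" if "i < n" "j \<in> ({..<n} - {i}) - Nb i" "c j > 0" for i j
    unfolding T2_def rem[OF that(1), symmetric]
    by (rule sum_strict_mono2) (use Nbsub cnn that in auto)
  have base: "phi * w i - (d i * m i + N * d i * (C - c i)) = d i * ((phi + N) * c i - (m i - m l))" for i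
  proof -
    have "N * d i * (C - c i) = d i * (N * C) - N * d i * c i" by (simp add: algebra_simps)
    also have "\<dots> = d i * (phi - m l) - N * d i * c i" using NC by simp
    finally have e: "N * d i * (C - c i) = d i * (phi - m l) - N * d i * c i" .
    show ?thesis unfolding e w_def by (simp add: algebra_simps)
  qed
  have slack: "(phi + N) * c i - (m i - m l) \<ge> 0" if "i < n" for i
    using phiN msort[of l i] that unfolding c_def by (cases "i < l") auto
  have Npos: "N * d i > 0" if "i < n" for i using N1 dpos[OF that] by simp
  have rowgen: "(\<Sum>j\<in>Nb i. w j) \<le> phi * w i \<and>
     (T1 i < N * d i * T2 i \<or> T2 i < C - c i \<or> (phi + N) * c i - (m i - m l) > 0
       \<longrightarrow> (\<Sum>j\<in>Nb i. w j) < phi * w i)" if i: "i < n" for i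
  proof -
    have a: "N * d i * T2 i \<le> N * d i * (C - c i)" using T23[OF i] Npos[OF i] by (intro mult_left_mono) auto
    have b: "d i * ((phi + N) * c i - (m i - m l)) \<ge> 0" using slack[OF i] dpos[OF i] by simp
    have as: "T2 i < C - c i \<Longrightarrow> N * d i * T2 i < N * d i * (C - c i)" using Npos[OF i] by (intro mult_strict_left_mono) auto
    have bs: "(phi + N) * c i - (m i - m l) > 0 \<Longrightarrow> d i * ((phi + N) * c i - (m i - m l)) > 0"
      using dpos[OF i] by simp
    show ?thesis using R[OF i] T12[of i] a b as bs base[of i] by linarith
  qed
  have strict: "\<exists>i<n. (\<Sum>j\<in>Nb i. w j) < phi * w i" if npr: "\<not> (\<forall>j<n. \<forall>k<n. m j = m k)"
  proof (cases "\<exists>j<l. m j > m l")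
    case True
    then obtain j where j: "j < l" "m j > m l" by auto
    have jn: "j < n" using j l by simp
    have cj: "c j > 0" using j phiN unfolding c_def by simp
    show ?thesis
    proof (cases "\<exists>i<n. i \<noteq> j \<and> \<not> E i j")
      case True
      then obtain i where i: "i < n" "i \<noteq> j" "\<not> E i j" by auto
      have "j \<in> ({..<n} - {i}) - Nb i" using i jn unfolding Nb_def by auto
      thus ?thesis using rowgen[OF i(1)] T23s[OF i(1) _ cj] i(1) by blast
    next
      case False
      hence adj: "\<forall>i<n. i \<noteq> j \<longrightarrow> E i j" by auto
      show ?thesis
      proof (cases "\<exists>i<n. i \<noteq> j \<and> d j < N * d i")
        case True
        then obtain i where i: "i < n" "i \<noteq> j" "d j < N * d i" by auto
        have "E i j" using adj i by auto
        hence "j \<in> Nb i" using jn unfolding Nb_def by auto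
        thus ?thesis using rowgen[OF i(1)] T12s[OF _ i(3) cj] i(1) by blast
      next
        case False
        have H: "d j = N * d i" if "i < n" "i \<noteq> j" for i
          using False adj rat[of i j] that by fastforce
        have dj: "d j > 0" using dpos jn by simp
        have mj: "m j = d j / N"
        proof -
          have "d j * m j = (\<Sum>k\<in>Nb j. d j / N)"
            unfolding dm[OF jn]
          proof (intro sum.cong refl)
            fix k assume k: "k \<in> Nb j"
            hence "k < n" "k \<noteq> j" using sgE unfolding Nb_def by auto
            hence "d j = N * d k" using H by simp
            thus "d k = d j / N" using N1 by (simp add: field_simps)
          qed
          also have "\<dots> = d j * (d j / N)" using dcard[of j] by simp
          finally have "d j * m j = d j * (d j / N)" .
          thus ?thesis using dj by (metis mult_left_cancel less_irrefl)
        qed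
        have "d l * m l \<ge> (\<Sum>k\<in>Nb l. d j / N)"
          unfolding dm[OF l]
        proof (rule sum_mono)
          fix k assume k: "k \<in> Nb l"
          show "d j / N \<le> d k"
          proof (cases "k = j")
            case True thus ?thesis using N1 dj by (simp add: divide_le_eq)
          next
            case False thus ?thesis using H[of k] k N1 unfolding Nb_def by auto
          qed
        qed
        also have "(\<Sum>k\<in>Nb l. d j / N) = d l * (d j / N)" using dcard[of l] by simp
        finally have "d l * (d j / N) \<le> d l * m l" .
        hence "m l \<ge> d j / N" using dpos[OF l] by (metis mult_le_cancel_left_pos)
        thus ?thesis using mj j(2) by simp
      qed
    qed
  next
    case False
    hence eq: "m k = m l" if "k < l" for k using msort[of k l] l that by force
    obtain a where a: "a < n" "m a \<noteq> m l"
      using npr by (metis l)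
    have al: "\<not> a < l" using eq a by auto
    have "m a < m l" using msort[of l a] al a by simp
    hence "(phi + N) * c a - (m a - m l) > 0" using al unfolding c_def by simp
    thus ?thesis using rowgen[OF a(1)] a(1) by blast
  qed
  define A where "A = adj_matrix n E"
  have Acar: "A \<in> carrier_mat n n" unfolding A_def adj_matrix_def by simp
  have n0: "n > 0" using n2 by simp
  obtain lam where lam: "lam \<in> spectrum A" "spectral_radius A = norm lam"
    using spectral_radius_mem_max(1)[OF Acar n0] by auto
  obtain v where v: "v \<in> carrier_vec n" "v \<noteq> 0\<^sub>v n" "A *\<^sub>v v = lam \<cdot>\<^sub>v v"
    using lam(1) Acar unfolding spectrum_def eigenvalue_def eigenvector_def by auto
  define y where "y k = norm (v $ k)" for k
  obtain p0 where p0: "p0 < n" "v $ p0 \<noteq> 0"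
    using v(1,2) by (metis carrier_vecD eq_vecI index_zero_vec(1,2))
  have Ay: "\<forall>i<n. norm lam * y i \<le> (\<Sum>j\<in>{j. j<n \<and> E i j}. y j)"
  proof (intro allI impI)
    fix i assume i: "i < n"
    have "lam * v $ i = (\<Sum>j | j < n \<and> E i j. v $ j)"
      using adj_mult[OF i, of v E] v(1,3) i unfolding A_def by (metis carrier_vecD index_smult_vec(1))
    hence "norm lam * y i = norm (\<Sum>j | j < n \<and> E i j. v $ j)" unfolding y_def by (metis norm_mult)
    also have "\<dots> \<le> (\<Sum>j | j < n \<and> E i j. y j)" unfolding y_def by (rule norm_sum)
    finally show "norm lam * y i \<le> (\<Sum>j\<in>{j. j<n \<and> E i j}. y j)" .
  qed
  have Aw: "\<forall>i<n. (\<Sum>j\<in>{j. j<n \<and> E i j}. w j) \<le> phi * w i"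
    using rowgen unfolding Nb_def by blast
  have ynn: "\<forall>i<n. y i \<ge> 0" unfolding y_def by simp
  have yp0: "y p0 > 0" unfolding y_def using p0 by simp
  have le: "norm lam \<le> phi" by (rule key(1)[OF Aw wpos ynn p0(1) yp0 Ay])
  have sgE': "\<forall>i j. E i j \<longrightarrow> i<n \<and> j<n" using sgE by blast
  have conE: "\<forall>i<n. \<forall>j<n. E\<^sup>*\<^sup>* i j" using con unfolding connected_graph_def .
  have lt: "norm lam < phi" if np: "\<not> (\<forall>j<n. \<forall>k<n. m j = m k)"
  proof -
    obtain i0 where "i0 < n" "(\<Sum>j\<in>Nb i0. w j) < phi * w i0" using strict[OF np] by auto
    thus ?thesis using key(2)[OF Aw wpos ynn p0(1) yp0 Ay sgE' conE] unfolding Nb_def by blast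
  qed
  have ge: "spectral_radius A \<ge> phi" if pr: "\<forall>j<n. \<forall>k<n. m j = m k"
  proof -
    have S0: "S = 0" unfolding S_def
    proof (rule sum.neutral, rule ballI)
      fix k assume "k \<in> {..<l}"
      hence "k < n" using l by simp
      thus "m k - m l = 0" using pr[rule_format, OF \<open>k < n\<close> l] by simp
    qed
    have phim: "phi = m l" using S0 phi q_def mlnn N1 by simp
    define dv where "dv = vec n (\<lambda>k. complex_of_real (d k))"
    have dvc: "dv \<in> carrier_vec n" unfolding dv_def by simp
    have dv0: "dv \<noteq> 0\<^sub>v n"
    proof
      assume "dv = 0\<^sub>v n"
      hence "dv $ 0 = 0" using n0 by simp
      thus False using dpos[OF n0] unfolding dv_def using n0 by simp
    qed
    have "A *\<^sub>v dv = complex_of_real (m l) \<cdot>\<^sub>v dv"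
    proof (rule eq_vecI)
      fix i assume "i < dim_vec (complex_of_real (m l) \<cdot>\<^sub>v dv)"
      hence i: "i < n" unfolding dv_def by simp
      have "(A *\<^sub>v dv) $ i = (\<Sum>j\<in>Nb i. complex_of_real (d j))"
        using adj_mult[OF i, of dv E] i unfolding A_def Nb_def dv_def by (auto intro!: sum.cong)
      also have "\<dots> = complex_of_real (d i * m i)" unfolding dm[OF i] by simp
      also have "\<dots> = complex_of_real (m l) * dv $ i"
      proof -
        have "m i = m l" using pr[rule_format, OF i l] .
        thus ?thesis using i unfolding dv_def by (simp add: mult.commute)
      qed
      finally show "(A *\<^sub>v dv) $ i = (complex_of_real (m l) \<cdot>\<^sub>v dv) $ i" using i dv_def by simp
    qed (use Acar dv_def in auto)
    hence "complex_of_real (m l) \<in> spectrum A"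
      unfolding spectrum_def eigenvalue_def eigenvector_def using dvc dv0 Acar by auto
    hence "norm (complex_of_real (m l)) \<le> spectral_radius A"
      using spectral_radius_mem_max(2)[OF Acar n0] by (meson image_eqI)
    thus ?thesis using phim mlnn by simp
  qed
  have r1: "spectral_radius A \<le> phi" using le lam(2) by simp
  have r2: "spectral_radius A = phi \<longleftrightarrow> (\<forall>j<n. \<forall>k<n. m j = m k)"
  proof
    assume "spectral_radius A = phi"
    thus "\<forall>j<n. \<forall>k<n. m j = m k" using lt lam(2) by (metis less_irrefl)
  next
    assume "\<forall>j<n. \<forall>k<n. m j = m k"
    thus "spectral_radius A = phi" using ge r1 by (metis order_antisym)
  qed
  show ?thesis using r1 r2 unfolding A_def by blast
qed


theorem corollary4:
  fixes n :: nat and E :: "nat \<Rightarrow> nat \<Rightarrow> bool"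
  assumes "simple_graph n E" and "connected_graph n E" and "n \<ge> 2"
    and "\<forall>i j. i \<le> j \<and> j < n \<longrightarrow> avg_degree n E j \<le> avg_degree n E i"
  shows "\<forall>i<n.
    (let m = avg_degree n E; N = max_deg_ratio n E;
         b = (m i - N + sqrt ((m i + N)\<^sup>2 + 4 * N * (\<Sum>k<i. m k - m i))) / 2
     in spectral_radius (adj_matrix n E) \<le> b \<and>
        (spectral_radius (adj_matrix n E) = b \<longleftrightarrow> (\<forall>j<n. \<forall>k<n. m j = m k)))"
  unfolding Let_def using main_l[OF assms] by blast

end
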